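(* Let $r, K, m, p, q, s, \gamma_A, \gamma_T$ be positive real constants, let $T>0$, and define, for $t\ge 0$ and $y\in\mathbb{R}$, $$f(t,y)=ry\Big(1-\frac{y}{K}\Big)+my\big(1-e^{-\gamma_A t}\big)+py\,e^{-\gamma_A t}-qy\big(1-e^{-\gamma_T t}\big)-sy\,e^{-\gamma_T t}.$$ Consider the initial value problem $\frac{dy}{dt}=f(t,y)$, $y(0)=y_0$, with $y_0>0$. Then this problem has a unique solution on $[0,T]$; this solution remains positive. Moreover, for the solution on $[0,\infty)$, $$\limsup_{t\to\infty} y(t)\le \frac{K(r+m+p)}{r}\qquad\text{and}\qquad \liminf_{t\to\infty} y(t)\ge \frac{K(r-q-s)}{r}.$$
   Context: This is a model for the proportion $y=n$ of damaged cells under a constant dose of inorganic arsenic (damaging, rate constant $\gamma_A$) and black tea (mitigating, rate constant $\gamma_T$): $r$ is a growth rate, $K$ a normalized carrying capacity, and $m,p,q,s$ are positive constants. *)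

theory Defs
  imports "HOL-Analysis.Analysis"
begin

definition arsenic_rhs ::
  "real \<Rightarrow> real \<Rightarrow> real \<Rightarrow> real \<Rightarrow> real \<Rightarrow> real \<Rightarrow> real \<Rightarrow> real \<Rightarrow> real \<Rightarrow> real \<Rightarrow> real" where
  "arsenic_rhs r K m p q s gA gT t y =
     r * y * (1 - y / K) + m * y * (1 - exp (- gA * t)) + p * y * exp (- gA * t)
     - q * y * (1 - exp (- gT * t)) - s * y * exp (- gT * t)"

definition solves_ivp :: "(real \<Rightarrow> real \<Rightarrow> real) \<Rightarrow> real \<Rightarrow> real set \<Rightarrow> (real \<Rightarrow> real) \<Rightarrow> bool" where
  "solves_ivp F y0 I y \<longleftrightarrow> y 0 = y0 \<and>
     (\<forall>t\<in>I. (y has_real_derivative F t (y t)) (at t within I))"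

end

theory Submission imports Defs begin

lemma nonincr_helper:
  fixes f f' :: "real \<Rightarrow> real"
  assumes d: "\<And>x. x \<in> {0..b} \<Longrightarrow> (f has_real_derivative f' x) (at x within {0..b})"
    and n: "\<And>x. x \<in> {0..b} \<Longrightarrow> f' x \<le> 0" and t: "t \<in> {0..b}"
  shows "f t \<le> f 0"
proof -
  have "continuous_on {0..b} f" by (rule DERIV_continuous_on[OF d])
  then have c: "continuous_on {0..t} f" by (rule continuous_on_subset) (use t in auto)
  have "f 0 \<ge> f t"
  proof (rule DERIV_nonpos_imp_decreasing_open[OF _ _ c])
    show "0 \<le> t" using t by auto
    fix x assume x: "0 < x" "x < t"
    have "at x within {0..b} = at x" using x t by (intro at_within_Icc_at) auto
    then have "DERIV f x :> f' x" using d[of x] x t by auto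
    then show "\<exists>y. DERIV f x :> y \<and> y \<le> 0" using n[of x] x t by auto
  qed
  then show ?thesis by simp
qed

lemma uniq_helper:
  fixes a y z :: "real \<Rightarrow> real" and c b :: real
  assumes ca: "continuous_on {0..b} a"
    and hy: "\<And>t. t \<in> {0..b} \<Longrightarrow> (y has_real_derivative (a t * y t - c * (y t)^2)) (at t within {0..b})"
    and hz: "\<And>t. t \<in> {0..b} \<Longrightarrow> (z has_real_derivative (a t * z t - c * (z t)^2)) (at t within {0..b})"
    and i: "y 0 = z 0" and t: "t \<in> {0..b}"
  shows "z t = y t"
proof -
  have cy: "continuous_on {0..b} y" by (rule DERIV_continuous_on[OF hy])
  have cz: "continuous_on {0..b} z" by (rule DERIV_continuous_on[OF hz])
  define g where "g = (\<lambda>t. a t - c * (y t + z t))"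
  have "continuous_on {0..b} g" unfolding g_def using ca cy cz by (intro continuous_intros)
  then have "compact (g ` {0..b})" by (intro compact_continuous_image) auto
  then have "bounded (g ` {0..b})" by (rule compact_imp_bounded)
  then obtain L where L: "\<And>x. x \<in> {0..b} \<Longrightarrow> norm (g x) \<le> L" unfolding bounded_iff by blast
  define h where "h = (\<lambda>t. (z t - y t)^2 * exp (-(2*L)*t))"
  define h' where "h' = (\<lambda>t. 2 * (z t - y t)^2 * exp (-(2*L)*t) * (g t - L))"
  have "h t \<le> h 0"
  proof (rule nonincr_helper[of b h h' t])
    fix x assume x: "x \<in> {0..b}"
    have "(h has_real_derivative
       2 * (z x - y x) * ((a x * z x - c * (z x)^2) - (a x * y x - c * (y x)^2)) * exp (-(2*L)*x)
        + (z x - y x)^2 * (exp (-(2*L)*x) * (-(2*L)))) (at x within {0..b})"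
      unfolding h_def
      by (rule derivative_eq_intros hy[OF x] hz[OF x] refl)+ (simp add: algebra_simps)
    moreover have "2 * (z x - y x) * ((a x * z x - c * (z x)^2) - (a x * y x - c * (y x)^2)) * exp (-(2*L)*x)
        + (z x - y x)^2 * (exp (-(2*L)*x) * (-(2*L))) = h' x"
      unfolding h'_def g_def by (simp add: power2_eq_square algebra_simps)
    ultimately show "(h has_real_derivative h' x) (at x within {0..b})" by simp
    have "g x \<le> L" using L[OF x] by auto
    then show "h' x \<le> 0" unfolding h'_def
      by (intro mult_nonneg_nonpos) auto
  qed (use t in auto)
  moreover have "h 0 = 0" using i unfolding h_def by simp
  moreover have "h t \<ge> 0" unfolding h_def by simp
  ultimately have "(z t - y t)^2 * exp (-(2*L)*t) = 0" unfolding h_def by linarith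
  then show ?thesis by simp
qed

lemma exist_helper:
  fixes a A :: "real \<Rightarrow> real" and c b y0 :: real
  assumes dA: "\<And>t. (A has_real_derivative a t) (at t)" and A0: "A 0 = 0"
    and c: "c \<ge> 0" and y0: "y0 > 0"
  shows "\<exists>Y. Y 0 = y0 \<and> (\<forall>t\<in>{0..b}. (Y has_real_derivative (a t * Y t - c * (Y t)^2)) (at t within {0..b}))
      \<and> (\<forall>t\<in>{0..b}. Y t > 0)"
proof -
  have cA: "continuous_on S A" for S
    by (rule has_real_derivative_imp_continuous_on[OF dA])
  have ce: "continuous_on S (\<lambda>s. exp (A s))" for S using cA[of S] by (intro continuous_intros)
  define G where "G = (\<lambda>t. integral {0..t} (\<lambda>s. exp (A s)))"
  define U where "U = (\<lambda>t. exp (- A t) * (1/y0 + c * G t))"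
  have G0: "G t \<ge> 0" if "t \<ge> 0" for t
    unfolding G_def by (rule integral_nonneg) (auto intro: integrable_continuous_interval ce)
  have Upos: "U t > 0" if "t \<ge> 0" for t
    unfolding U_def using G0[OF that] c y0 by (intro mult_pos_pos add_pos_nonneg mult_nonneg_nonneg) auto
  have dG: "(G has_real_derivative exp (A t)) (at t within {0..b})" if "t \<in> {0..b}" for t
    unfolding G_def by (rule integral_has_real_derivative[OF ce that])
  have dU: "(U has_real_derivative (- a t * U t + c)) (at t within {0..b})" if t: "t \<in> {0..b}" for t
  proof -
    have dA': "(A has_real_derivative a t) (at t within {0..b})"
      using dA[of t] by (rule has_field_derivative_at_within)
    have "(U has_real_derivative exp (- A t) * (- a t) * (1/y0 + c * G t) + exp (- A t) * (c * exp (A t)))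
        (at t within {0..b})"
      unfolding U_def
      by (rule derivative_eq_intros dA' dG[OF t] refl)+ (simp add: algebra_simps)
    moreover have "exp (- A t) * (- a t) * (1/y0 + c * G t) + exp (- A t) * (c * exp (A t)) = - a t * U t + c"
      unfolding U_def by (simp add: exp_minus field_simps)
    ultimately show ?thesis by simp
  qed
  define Y where "Y = (\<lambda>t. 1 / U t)"
  have "Y 0 = y0" unfolding Y_def U_def G_def using A0 by simp
  moreover have "\<forall>t\<in>{0..b}. (Y has_real_derivative (a t * Y t - c * (Y t)^2)) (at t within {0..b})"
  proof
    fix t assume t: "t \<in> {0..b}"
    have U0: "U t \<noteq> 0" using Upos[of t] t by auto
    have "(Y has_real_derivative - ((- a t * U t + c) / (U t)^2)) (at t within {0..b})"
      unfolding Y_def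
      by (rule derivative_eq_intros dU[OF t] refl)+ (use U0 in \<open>simp_all add: field_simps power2_eq_square\<close>)
    moreover have "- ((- a t * U t + c) / (U t)^2) = a t * Y t - c * (Y t)^2"
      unfolding Y_def using U0 by (simp add: field_simps power2_eq_square)
    ultimately show "(Y has_real_derivative (a t * Y t - c * (Y t)^2)) (at t within {0..b})" by simp
  qed
  moreover have "\<forall>t\<in>{0..b}. Y t > 0" unfolding Y_def using Upos by auto
  ultimately show ?thesis by blast
qed

lemma alg1: "(al::real) \<noteq> 0 \<Longrightarrow> - ((- a * w + c) * E + (w - c / al) * (E * al)) = - ((al - a) * w * E)"
proof -
  assume "al \<noteq> 0"
  then have h: "c / al * al = c" by simp
  have "- ((- a * w + c) * E + (w - c / al) * (E * al)) = - ((- a * w + c) * E + w * E * al - (c / al * al) * E)"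
    by (simp add: algebra_simps)
  also have "\<dots> = - ((al - a) * w * E)" unfolding h by (simp add: algebra_simps)
  finally show ?thesis .
qed

lemma alg2: "(al::real) \<noteq> 0 \<Longrightarrow> ((- a * w + c) * E + (w - c / al) * (E * al)) = ((al - a) * w * E)"
proof -
  assume "al \<noteq> 0"
  then have h: "c / al * al = c" by simp
  have "((- a * w + c) * E + (w - c / al) * (E * al)) = ((- a * w + c) * E + w * E * al - (c / al * al) * E)"
    by (simp add: algebra_simps)
  also have "\<dots> = ((al - a) * w * E)" unfolding h by (simp add: algebra_simps)
  finally show ?thesis .
qed

lemma lower_u:
  fixes a y :: "real \<Rightarrow> real" and c al b :: real
  assumes d: "\<And>t. t \<in> {0..b} \<Longrightarrow> ((\<lambda>t. 1 / y t) has_real_derivative (- a t * (1 / y t) + c)) (at t within {0..b})"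
    and pos: "\<And>t. t \<in> {0..b} \<Longrightarrow> y t > 0" and al: "\<And>t. t \<in> {0..b} \<Longrightarrow> a t \<le> al"
    and t: "t \<in> {0..b}" and alp: "al \<noteq> 0"
  shows "1 / y t \<ge> c / al + (1 / y 0 - c / al) * exp (- al * t)"
proof -
  define f where "f = (\<lambda>t. - ((1 / y t - c / al) * exp (al * t)))"
  define f' where "f' = (\<lambda>t. - ((al - a t) * (1 / y t) * exp (al * t)))"
  have "f t \<le> f 0"
  proof (rule nonincr_helper[of b f f' t])
    fix x assume x: "x \<in> {0..b}"
    have "(f has_real_derivative - ((- a x * (1 / y x) + c) * exp (al * x) + (1 / y x - c / al) * (exp (al * x) * al)))
       (at x within {0..b})"
      unfolding f_def by (rule derivative_eq_intros d[OF x] refl)+ (simp add: algebra_simps)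
    moreover have "- ((- a x * (1 / y x) + c) * exp (al * x) + (1 / y x - c / al) * (exp (al * x) * al)) = f' x"
      unfolding f'_def by (rule alg1[OF alp])
    ultimately show "(f has_real_derivative f' x) (at x within {0..b})" by simp
    show "f' x \<le> 0" unfolding f'_def using al[OF x] pos[OF x] by simp
  qed (use t in auto)
  then have "(1 / y t - c / al) * exp (al * t) \<ge> 1 / y 0 - c / al" unfolding f_def by simp
  then have "(1 / y t - c / al) * exp (al * t) * exp (- al * t) \<ge> (1 / y 0 - c / al) * exp (- al * t)"
    by (intro mult_right_mono) auto
  then show ?thesis by (simp add: mult.assoc exp_add[symmetric])
qed

lemma upper_u:
  fixes a y :: "real \<Rightarrow> real" and c al b :: real
  assumes d: "\<And>t. t \<in> {0..b} \<Longrightarrow> ((\<lambda>t. 1 / y t) has_real_derivative (- a t * (1 / y t) + c)) (at t within {0..b})"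
    and pos: "\<And>t. t \<in> {0..b} \<Longrightarrow> y t > 0" and al: "\<And>t. t \<in> {0..b} \<Longrightarrow> a t \<ge> al"
    and t: "t \<in> {0..b}" and alp: "al \<noteq> 0"
  shows "1 / y t \<le> c / al + (1 / y 0 - c / al) * exp (- al * t)"
proof -
  define f where "f = (\<lambda>t. ((1 / y t - c / al) * exp (al * t)))"
  define f' where "f' = (\<lambda>t. ((al - a t) * (1 / y t) * exp (al * t)))"
  have "f t \<le> f 0"
  proof (rule nonincr_helper[of b f f' t])
    fix x assume x: "x \<in> {0..b}"
    have "(f has_real_derivative ((- a x * (1 / y x) + c) * exp (al * x) + (1 / y x - c / al) * (exp (al * x) * al)))
       (at x within {0..b})"
      unfolding f_def by (rule derivative_eq_intros d[OF x] refl)+ (simp add: algebra_simps)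
    moreover have "((- a x * (1 / y x) + c) * exp (al * x) + (1 / y x - c / al) * (exp (al * x) * al)) = f' x"
      unfolding f'_def by (rule alg2[OF alp])
    ultimately show "(f has_real_derivative f' x) (at x within {0..b})" by simp
    show "f' x \<le> 0" unfolding f'_def using al[OF x] pos[OF x]
      by (intro mult_nonpos_nonneg) auto
  qed (use t in auto)
  then have "(1 / y t - c / al) * exp (al * t) \<le> 1 / y 0 - c / al" unfolding f_def by simp
  then have "(1 / y t - c / al) * exp (al * t) * exp (- al * t) \<le> (1 / y 0 - c / al) * exp (- al * t)"
    by (intro mult_right_mono) auto
  then show ?thesis by (simp add: mult.assoc exp_add[symmetric])
qed

lemma lim_helper:
  fixes c al u0 :: real
  assumes "al > 0" "c > 0"
  shows "((\<lambda>t. c / al + u0 * exp (- al * t)) \<longlongrightarrow> c / al) at_top"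
proof -
  have "((\<lambda>t. exp (- al * t)) \<longlongrightarrow> 0) at_top"
    using assms(1) by (intro filterlim_compose[OF exp_at_bot] filterlim_tendsto_neg_mult_at_bot[OF tendsto_const]) (auto simp: filterlim_ident)
  then have "((\<lambda>t. c / al + u0 * exp (- al * t)) \<longlongrightarrow> c / al + u0 * 0) at_top"
    by (intro tendsto_intros)
  then show ?thesis by simp
qed

theorem mainTheorem1:
  fixes r K m p q s gA gT T y0 :: real
  assumes "r > 0" "K > 0" "m > 0" "p > 0" "q > 0" "s > 0" "gA > 0" "gT > 0"
    and "T > 0" and "y0 > 0"
  shows "(\<exists>y. solves_ivp (arsenic_rhs r K m p q s gA gT) y0 {0..T} y
            \<and> (\<forall>z. solves_ivp (arsenic_rhs r K m p q s gA gT) y0 {0..T} z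
                   \<longrightarrow> (\<forall>t\<in>{0..T}. z t = y t))
            \<and> (\<forall>t\<in>{0..T}. y t > 0))
       \<and> (\<forall>y. solves_ivp (arsenic_rhs r K m p q s gA gT) y0 {0..} y \<longrightarrow>
            Limsup at_top (\<lambda>t. ereal (y t)) \<le> ereal (K * (r + m + p) / r)
          \<and> Liminf at_top (\<lambda>t. ereal (y t)) \<ge> ereal (K * (r - q - s) / r))"
proof -
  note as = assms
  define a where "a = (\<lambda>t::real. r + m*(1-exp(-gA*t)) + p*exp(-gA*t) - q*(1-exp(-gT*t)) - s*exp(-gT*t))"
  define A where "A = (\<lambda>t::real. (r+m-q)*t + (p-m)*(1-exp(-gA*t))/gA + (q-s)*(1-exp(-gT*t))/gT)"
  define c where "c = r/K"
  have c0: "c > 0" unfolding c_def using as by simp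
  have F: "arsenic_rhs r K m p q s gA gT t u = a t * u - c * u^2" for t u
    unfolding arsenic_rhs_def a_def c_def using as by (simp add: field_simps power2_eq_square)
  have dA: "(A has_real_derivative a t) (at t)" for t
    unfolding A_def a_def using as
    by (auto intro!: derivative_eq_intros simp: field_simps)
  have A0: "A 0 = 0" by (simp add: A_def)
  have ca: "continuous_on S a" for S unfolding a_def by (intro continuous_intros)
  have ex: "\<exists>Y. Y 0 = y0 \<and> (\<forall>t\<in>{0..b}. (Y has_real_derivative (a t * Y t - c * (Y t)^2)) (at t within {0..b}))
      \<and> (\<forall>t\<in>{0..b}. Y t > 0)" for b
    by (rule exist_helper[where A=A and a=a and c=c and b=b]) (use dA A0 c0 as in auto)
  have sol: "solves_ivp (arsenic_rhs r K m p q s gA gT) y0 S Y \<longleftrightarrow>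
     Y 0 = y0 \<and> (\<forall>t\<in>S. (Y has_real_derivative (a t * Y t - c * (Y t)^2)) (at t within S))" for S Y
    by (simp add: solves_ivp_def F)
  have part1: "\<exists>y. solves_ivp (arsenic_rhs r K m p q s gA gT) y0 {0..T} y
            \<and> (\<forall>z. solves_ivp (arsenic_rhs r K m p q s gA gT) y0 {0..T} z
                   \<longrightarrow> (\<forall>t\<in>{0..T}. z t = y t))
            \<and> (\<forall>t\<in>{0..T}. y t > 0)"
  proof -
    obtain Y where Y: "Y 0 = y0" "\<forall>t\<in>{0..T}. (Y has_real_derivative (a t * Y t - c * (Y t)^2)) (at t within {0..T})"
      "\<forall>t\<in>{0..T}. Y t > 0" using ex[of T] by blast
    have "\<forall>z. solves_ivp (arsenic_rhs r K m p q s gA gT) y0 {0..T} z \<longrightarrow> (\<forall>t\<in>{0..T}. z t = Y t)"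
    proof (intro allI impI ballI)
      fix z t assume z: "solves_ivp (arsenic_rhs r K m p q s gA gT) y0 {0..T} z" and t: "t \<in> {0..T}"
      show "z t = Y t"
        by (rule uniq_helper[where a=a and c=c and b=T and y=Y and z=z and t=t])
           (use z Y ca t in \<open>auto simp: sol\<close>)
    qed
    then show ?thesis using Y sol by blast
  qed
  have part2: "Limsup at_top (\<lambda>t. ereal (y t)) \<le> ereal (K * (r + m + p) / r)
          \<and> Liminf at_top (\<lambda>t. ereal (y t)) \<ge> ereal (K * (r - q - s) / r)"
    if hy: "solves_ivp (arsenic_rhs r K m p q s gA gT) y0 {0..} y" for y
  proof -
    have y0': "y 0 = y0" and dy: "\<And>t. t \<in> {0..} \<Longrightarrow> (y has_real_derivative (a t * y t - c * (y t)^2)) (at t within {0..})"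
      using hy unfolding sol by auto
    have dyb: "(y has_real_derivative (a t * y t - c * (y t)^2)) (at t within {0..b})" if "t \<in> {0..b}" for t b
      using dy[of t] that by (rule_tac DERIV_subset) auto
    have ypos: "y t > 0" if "t \<ge> 0" for t
    proof -
      obtain Y where Y: "Y 0 = y0" "\<forall>t'\<in>{0..t}. (Y has_real_derivative (a t' * Y t' - c * (Y t')^2)) (at t' within {0..t})"
        "\<forall>t'\<in>{0..t}. Y t' > 0" using ex[of t] by blast
      have "y t = Y t"
        by (rule uniq_helper[where a=a and c=c and b=t and y=Y and z=y and t=t])
           (use ca Y y0' that dyb in auto)
      then show ?thesis using Y that by auto
    qed
    have du: "((\<lambda>t. 1 / y t) has_real_derivative (- a t * (1 / y t) + c)) (at t within {0..b})"
      if t: "t \<in> {0..b}" for t b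
    proof -
      have yt: "y t \<noteq> 0" using ypos[of t] t by auto
      have eq: "(\<lambda>t. 1 / y t) = (\<lambda>t. inverse (y t))" by (simp add: inverse_eq_divide)
      have "((\<lambda>t. 1 / y t) has_real_derivative - (inverse (y t) * (a t * y t - c * (y t)^2) * inverse (y t))) (at t within {0..b})"
        unfolding eq by (rule DERIV_inverse'[OF dyb[OF t] yt])
      moreover have "- (inverse (y t) * (a t * y t - c * (y t)^2) * inverse (y t)) = - a t * (1 / y t) + c"
        using yt by (simp add: field_simps power2_eq_square)
      ultimately show ?thesis by simp
    qed
    have eb: "exp (- g * t) \<le> 1" "exp (- g * t) > 0" if "g > 0" "t \<ge> 0" for g t :: real
    proof -
      have "0 \<le> g * t" using that by simp
      then show "exp (- g * t) \<le> 1" by simp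
      show "exp (- g * t) > 0" by simp
    qed
    have aup: "a t \<le> r + m + p" if "t \<ge> 0" for t
    proof -
      have "m * (1 - exp (-gA*t)) \<le> m" "p * exp (-gA*t) \<le> p" "q * (1 - exp (-gT*t)) \<ge> 0" "s * exp (-gT*t) \<ge> 0"
        using eb[of gA t] eb[of gT t] that as by auto
      then show ?thesis unfolding a_def by linarith
    qed
    have alow: "a t \<ge> r - q - s" if "t \<ge> 0" for t
    proof -
      have "m * (1 - exp (-gA*t)) \<ge> 0" "p * exp (-gA*t) \<ge> 0" "q * (1 - exp (-gT*t)) \<le> q" "s * exp (-gT*t) \<le> s"
        using eb[of gA t] eb[of gT t] that as by auto
      then show ?thesis unfolding a_def by linarith
    qed
    have ntriv: "\<not> trivial_limit (at_top :: real filter)" by simp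
    have ls: "Limsup at_top (\<lambda>t. ereal (y t)) \<le> ereal (K * (r + m + p) / r)"
    proof -
      define al where "al = r + m + p"
      have al0: "al > 0" unfolding al_def using as by simp
      define D where "D = (\<lambda>t. c / al + (1 / y0 - c / al) * exp (- al * t))"
      have Dle: "D t \<le> 1 / y t" if "t \<ge> 0" for t
      proof -
        have "1 / y t \<ge> c / al + (1 / y 0 - c / al) * exp (- al * t)"
          by (rule lower_u[where a=a and y=y and c=c and al=al and b=t and t=t])
             (use du ypos aup that al0 in \<open>auto simp: al_def\<close>)
        then show ?thesis unfolding D_def using y0' by simp
      qed
      have Dlim: "(D \<longlongrightarrow> c / al) at_top" unfolding D_def using lim_helper[OF al0 c0] .
      have "eventually (\<lambda>t. D t > 0) at_top"
        using order_tendstoD(1)[OF Dlim, of 0] c0 al0 by simp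
      moreover have "eventually (\<lambda>t::real. t \<ge> 0) at_top" by (rule eventually_ge_at_top)
      ultimately have ev: "eventually (\<lambda>t. ereal (y t) \<le> ereal (1 / D t)) at_top"
      proof eventually_elim
        case (elim t)
        have "D t * y t \<le> 1 / y t * y t" using Dle[OF elim(2)] ypos[OF elim(2)]
          by (intro mult_right_mono) auto
        then have "D t * y t \<le> 1" using ypos[OF elim(2)] by simp
        then show ?case using elim(1) by (simp add: field_simps)
      qed
      have "((\<lambda>t. ereal (1 / D t)) \<longlongrightarrow> ereal (1 / (c / al))) at_top"
        unfolding lim_ereal using c0 al0 by (intro tendsto_intros Dlim) auto
      then have "Limsup at_top (\<lambda>t. ereal (1 / D t)) = ereal (1 / (c / al))"
        by (rule lim_imp_Limsup[OF ntriv])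
      moreover have "1 / (c / al) = K * (r + m + p) / r" unfolding c_def al_def using as by simp
      ultimately show ?thesis using Limsup_mono[OF ev] by simp
    qed
    have li: "Liminf at_top (\<lambda>t. ereal (y t)) \<ge> ereal (K * (r - q - s) / r)"
    proof (cases "r - q - s > 0")
      case False
      have "ereal (K * (r - q - s) / r) \<le> 0" using False as
        by (simp add: divide_nonpos_pos mult_nonneg_nonpos)
      also have "0 = Liminf (at_top::real filter) (\<lambda>t. ereal 0)" by (simp add: Liminf_const[OF ntriv])
      also have "\<dots> \<le> Liminf at_top (\<lambda>t. ereal (y t))"
      proof (rule Liminf_mono)
        show "eventually (\<lambda>t. ereal 0 \<le> ereal (y t)) at_top"
          using eventually_ge_at_top[of "0::real"]
        proof eventually_elim
          case (elim t)
          then show ?case using ypos[of t] by simp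
        qed
      qed
      finally show ?thesis .
    next
      case True
      define al where "al = r - q - s"
      have al0: "al > 0" unfolding al_def using True by simp
      define D where "D = (\<lambda>t. c / al + (1 / y0 - c / al) * exp (- al * t))"
      have Dle: "D t \<ge> 1 / y t" if "t \<ge> 0" for t
      proof -
        have "1 / y t \<le> c / al + (1 / y 0 - c / al) * exp (- al * t)"
          by (rule upper_u[where a=a and y=y and c=c and al=al and b=t and t=t])
             (use du ypos alow that al0 in \<open>auto simp: al_def\<close>)
        then show ?thesis unfolding D_def using y0' by simp
      qed
      have Dlim: "(D \<longlongrightarrow> c / al) at_top" unfolding D_def using lim_helper[OF al0 c0] .
      have ev: "eventually (\<lambda>t. ereal (1 / D t) \<le> ereal (y t)) at_top"
        using eventually_ge_at_top[of "0::real"]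
      proof eventually_elim
        case (elim t)
        have yp: "y t > 0" using ypos[OF elim] .
        have "1 / y t * y t \<le> D t * y t" using Dle[OF elim] yp
          by (intro mult_right_mono) auto
        then have "1 \<le> D t * y t" using yp by simp
        moreover have "D t > 0" using Dle[OF elim] yp by (smt (verit) divide_pos_pos)
        ultimately show ?case by (simp add: field_simps)
      qed
      have "((\<lambda>t. ereal (1 / D t)) \<longlongrightarrow> ereal (1 / (c / al))) at_top"
        unfolding lim_ereal using c0 al0 by (intro tendsto_intros Dlim) auto
      then have "Liminf at_top (\<lambda>t. ereal (1 / D t)) = ereal (1 / (c / al))"
        by (rule lim_imp_Liminf[OF ntriv])
      moreover have "1 / (c / al) = K * (r - q - s) / r" unfolding c_def al_def using as by simp
      ultimately show ?thesis using Liminf_mono[OF ev] by simp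
    qed
    show ?thesis using ls li by simp
  qed
  show ?thesis using part1 part2 by blast
qed

end
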